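(* Let $\pi=(\pi_n^{n+1}\colon(X_{n+1},f_{n+1})\to(X_n,f_n))_{n\ge1}$ be an inverse sequence of equivariant maps, let $(X,f)=\lim_\pi(X_n,f_n)$, and suppose $f_n$ is chain transitive for every $n\ge1$ (so $f$ is chain transitive). Let $\mathcal{D}_\pi=\{(D_n)_{n\ge1}\in\prod_{n\ge1}\mathcal{D}(f_n):\pi_n^{n+1}(D_{n+1})\subset D_n\ \forall n\ge1\}$ and, for $D_\ast=(D_n)_{n\ge1}\in\mathcal{D}_\pi$, $[D_\ast]=\{x=(x_n)_{n\ge1}\in X:x_n\in D_n\ \forall n\ge1\}$. If $\pi$ satisfies MLC(1), then $\mathcal{D}(f)=\{[D_\ast]:D_\ast\in\mathcal{D}_\pi\}$.
   Context: Each $X_n$ is a compact metric space, $f_n$ a continuous self-map, $\pi_n^{n+1}\colon X_{n+1}\to X_n$ continuous with $f_n\circ\pi_n^{n+1}=\pi_n^{n+1}\circ f_{n+1}$. $X=\{(x_n)\in\prod_n X_n:\pi_n^{n+1}(x_{n+1})=x_n\ \forall n\}$ with the product topology and $f((x_n))=(f_n(x_n))$. $\pi$ satisfies MLC(1) if $\pi_n^{n+1}(X_{n+1})=\pi_n^{n+1}(\pi_{n+1}^{n+2}(X_{n+2}))$ for all $n$. For a continuous map $g$ of a compact metric space $(Y,d)$: a $\delta$-chain is a finite sequence $(y_i)_{i=0}^k$, $k>0$, with $d(g(y_i),y_{i+1})\le\delta$, a $\delta$-cycle of length $k$ if $y_0=y_k$; $g$ is chain transitive if any two points are joined by a $\delta$-chain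 for every $\delta>0$. For chain transitive $g$ and $\delta>0$, $m(g,\delta)$ is the gcd of the lengths of $\delta$-cycles; $y\sim_{g,\delta}z$ iff there is a $\delta$-chain from $y$ to $z$ of length divisible by $m(g,\delta)$; $y\sim_g z$ iff $y\sim_{g,\delta}z$ for all $\delta>0$; $\mathcal{D}(g)$ is the set of equivalence classes of $\sim_g$. *)

theory Defs
  imports "HOL-Analysis.Analysis"
begin

definition is_chain ::
  "('a \<Rightarrow> 'a \<Rightarrow> real) \<Rightarrow> 'a set \<Rightarrow> ('a \<Rightarrow> 'a) \<Rightarrow> real \<Rightarrow> nat \<Rightarrow> 'a \<Rightarrow> 'a \<Rightarrow> bool" where
  "is_chain d Y g \<delta> k y z \<longleftrightarrow> 0 < k \<and>
     (\<exists>c :: nat \<Rightarrow> 'a. c 0 = y \<and> c k = z \<and> (\<forall>i\<le>k. c i \<in> Y) \<and>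
        (\<forall>i<k. d (g (c i)) (c (Suc i)) \<le> \<delta>))"

definition chain_transitive ::
  "('a \<Rightarrow> 'a \<Rightarrow> real) \<Rightarrow> 'a set \<Rightarrow> ('a \<Rightarrow> 'a) \<Rightarrow> bool" where
  "chain_transitive d Y g \<longleftrightarrow>
     (\<forall>y\<in>Y. \<forall>z\<in>Y. \<forall>\<delta>>0. \<exists>k. is_chain d Y g \<delta> k y z)"

definition cycle_gcd ::
  "('a \<Rightarrow> 'a \<Rightarrow> real) \<Rightarrow> 'a set \<Rightarrow> ('a \<Rightarrow> 'a) \<Rightarrow> real \<Rightarrow> nat" where
  "cycle_gcd d Y g \<delta> = Gcd {k. \<exists>y\<in>Y. is_chain d Y g \<delta> k y y}"

definition rel_delta ::
  "('a \<Rightarrow> 'a \<Rightarrow> real) \<Rightarrow> 'a set \<Rightarrow> ('a \<Rightarrow> 'a) \<Rightarrow> real \<Rightarrow> 'a \<Rightarrow> 'a \<Rightarrow> bool" where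
  "rel_delta d Y g \<delta> y z \<longleftrightarrow>
     (\<exists>k. cycle_gcd d Y g \<delta> dvd k \<and> is_chain d Y g \<delta> k y z)"

definition chain_rel ::
  "('a \<Rightarrow> 'a \<Rightarrow> real) \<Rightarrow> 'a set \<Rightarrow> ('a \<Rightarrow> 'a) \<Rightarrow> ('a \<times> 'a) set" where
  "chain_rel d Y g = {(y, z). y \<in> Y \<and> z \<in> Y \<and> (\<forall>\<delta>>0. rel_delta d Y g \<delta> y z)}"

definition Dcl ::
  "('a \<Rightarrow> 'a \<Rightarrow> real) \<Rightarrow> 'a set \<Rightarrow> ('a \<Rightarrow> 'a) \<Rightarrow> 'a set set" where
  "Dcl d Y g = Y // chain_rel d Y g"

definition invlim :: "(nat \<Rightarrow> 'a set) \<Rightarrow> (nat \<Rightarrow> 'a \<Rightarrow> 'a) \<Rightarrow> (nat \<Rightarrow> 'a) set" where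
  "invlim X \<pi> = {x. \<forall>n. x n \<in> X n \<and> \<pi> n (x (Suc n)) = x n}"

definition limmap :: "(nat \<Rightarrow> 'a \<Rightarrow> 'a) \<Rightarrow> (nat \<Rightarrow> 'a) \<Rightarrow> (nat \<Rightarrow> 'a)" where
  "limmap f x = (\<lambda>n. f n (x n))"

definition invlim_dist :: "(nat \<Rightarrow> 'a::metric_space) \<Rightarrow> (nat \<Rightarrow> 'a) \<Rightarrow> real" where
  "invlim_dist x y = (\<Sum>n. (1/2) ^ n * min 1 (dist (x n) (y n)))"

definition MLC1 :: "(nat \<Rightarrow> 'a set) \<Rightarrow> (nat \<Rightarrow> 'a \<Rightarrow> 'a) \<Rightarrow> bool" where
  "MLC1 X \<pi> \<longleftrightarrow> (\<forall>n. \<pi> n ` X (Suc n) = \<pi> n ` (\<pi> (Suc n) ` X (Suc (Suc n))))"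

definition Dpi :: "(nat \<Rightarrow> 'a::metric_space set) \<Rightarrow> (nat \<Rightarrow> 'a \<Rightarrow> 'a) \<Rightarrow> (nat \<Rightarrow> 'a \<Rightarrow> 'a)
    \<Rightarrow> (nat \<Rightarrow> 'a set) set" where
  "Dpi X f \<pi> = {D. (\<forall>n. D n \<in> Dcl dist (X n) (f n)) \<and> (\<forall>n. \<pi> n ` D (Suc n) \<subseteq> D n)}"

definition bracket :: "(nat \<Rightarrow> 'a set) \<Rightarrow> (nat \<Rightarrow> 'a \<Rightarrow> 'a) \<Rightarrow> (nat \<Rightarrow> 'a set) \<Rightarrow> (nat \<Rightarrow> 'a) set" where
  "bracket X \<pi> D = {x \<in> invlim X \<pi>. \<forall>n. x n \<in> D n}"

end

theory Submission
  imports Defs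
begin
lemma is_chain_in: "is_chain d Y g \<delta> k a b \<Longrightarrow> a \<in> Y \<and> b \<in> Y"
  unfolding is_chain_def by (metis le0 order_refl)


lemma is_chain_concat:
  assumes "is_chain d Y g \<delta> k a b" "is_chain d Y g \<delta> j b c"
  shows "is_chain d Y g \<delta> (k+j) a c"
proof -
  obtain c1 where c1: "c1 0 = a" "c1 k = b" "\<forall>i\<le>k. c1 i \<in> Y" "\<forall>i<k. d (g (c1 i)) (c1 (Suc i)) \<le> \<delta>" and k: "0<k"
    using assms(1) unfolding is_chain_def by blast
  obtain c2 where c2: "c2 0 = b" "c2 j = c" "\<forall>i\<le>j. c2 i \<in> Y" "\<forall>i<j. d (g (c2 i)) (c2 (Suc i)) \<le> \<delta>" and j: "0<j"
    using assms(2) unfolding is_chain_def by blast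
  define w where "w i = (if i \<le> k then c1 i else c2 (i - k))" for i
  have w0: "w 0 = a" using c1 by (simp add: w_def)
  have wk: "w (k+j) = c" using c2 j unfolding w_def by simp
  have wY: "\<forall>i\<le>k+j. w i \<in> Y"
  proof (intro allI impI)
    fix i assume i: "i \<le> k+j"
    show "w i \<in> Y"
    proof (cases "i \<le> k")
      case True then show ?thesis using c1(3) by (simp add: w_def)
    next
      case False then have "i - k \<le> j" using i by linarith
      then show ?thesis using False c2(3) by (simp add: w_def)
    qed
  qed
  have wd: "\<forall>i<k+j. d (g (w i)) (w (Suc i)) \<le> \<delta>"
  proof (intro allI impI)
    fix i assume i: "i < k+j"
    show "d (g (w i)) (w (Suc i)) \<le> \<delta>"
    proof (cases "i < k")
      case True then show ?thesis using c1(4) by (simp add: w_def)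
    next
      case False
      have e1: "w i = c2 (i-k)" using False c1(2) c2(1) by (auto simp: w_def)
      have e2: "w (Suc i) = c2 (Suc (i-k))" using False by (simp add: w_def Suc_diff_le)
      have "i - k < j" using i False by auto
      then show ?thesis using e1 e2 c2(4) by simp
    qed
  qed
  have "0 < k + j" using k by simp
  then show ?thesis unfolding is_chain_def using w0 wk wY wd by blast
qed



lemma cycle_gcd_dvd: "y \<in> Y \<Longrightarrow> is_chain d Y g \<delta> k y y \<Longrightarrow> cycle_gcd d Y g \<delta> dvd k"
  unfolding cycle_gcd_def by (rule Gcd_dvd) blast

lemma chain_rel_equiv:
  assumes ct: "chain_transitive d Y g"
  shows "equiv Y (chain_rel d Y g)"
proof (rule equivI)
  show "chain_rel d Y g \<subseteq> Y \<times> Y" by (auto simp: chain_rel_def)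
  show "refl_on Y (chain_rel d Y g)"
  proof (rule refl_onI)
    fix a assume a: "a \<in> Y"
    have "rel_delta d Y g \<delta> a a" if dpos: "\<delta> > 0" for \<delta>
    proof -
      obtain k where k: "is_chain d Y g \<delta> k a a" using ct a dpos unfolding chain_transitive_def by blast
      have "cycle_gcd d Y g \<delta> dvd k" using cycle_gcd_dvd[OF a k] .
      then show ?thesis unfolding rel_delta_def using k by blast
    qed
    then show "(a,a) \<in> chain_rel d Y g" using a unfolding chain_rel_def by blast
  qed
  show "sym (chain_rel d Y g)"
  proof (rule symI)
    fix a b assume ab: "(a,b) \<in> chain_rel d Y g"
    then have a: "a \<in> Y" and b: "b \<in> Y" by (auto simp: chain_rel_def)
    have "rel_delta d Y g \<delta> b a" if dpos: "\<delta> > 0" for \<delta>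
    proof -
      have "rel_delta d Y g \<delta> a b" using ab dpos unfolding chain_rel_def by blast
      then obtain k where k: "cycle_gcd d Y g \<delta> dvd k" "is_chain d Y g \<delta> k a b"
        unfolding rel_delta_def by blast
      obtain j where j: "is_chain d Y g \<delta> j b a" using ct a b dpos unfolding chain_transitive_def by blast
      have "is_chain d Y g \<delta> (k+j) a a" using is_chain_concat[OF k(2) j] .
      then have "cycle_gcd d Y g \<delta> dvd (k+j)" by (rule cycle_gcd_dvd[OF a])
      then have "cycle_gcd d Y g \<delta> dvd j" using dvd_add_right_iff[OF k(1)] by blast
      then show ?thesis unfolding rel_delta_def using j by blast
    qed
    then show "(b,a) \<in> chain_rel d Y g" using a b unfolding chain_rel_def by blast
  qed
  show "trans (chain_rel d Y g)"
  proof (rule transI)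
    fix a b c assume ab: "(a,b) \<in> chain_rel d Y g" and bc: "(b,c) \<in> chain_rel d Y g"
    then have a: "a \<in> Y" and c: "c \<in> Y" by (auto simp: chain_rel_def)
    have "rel_delta d Y g \<delta> a c" if dpos: "\<delta> > 0" for \<delta>
    proof -
      have "rel_delta d Y g \<delta> a b" using ab dpos unfolding chain_rel_def by blast
      then obtain k where k: "cycle_gcd d Y g \<delta> dvd k" "is_chain d Y g \<delta> k a b"
        unfolding rel_delta_def by blast
      have "rel_delta d Y g \<delta> b c" using bc dpos unfolding chain_rel_def by blast
      then obtain j where j: "cycle_gcd d Y g \<delta> dvd j" "is_chain d Y g \<delta> j b c"
        unfolding rel_delta_def by blast
      have "cycle_gcd d Y g \<delta> dvd (k+j)" using k(1) j(1) by (rule dvd_add)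
      then show ?thesis unfolding rel_delta_def using is_chain_concat[OF k(2) j(2)] by blast
    qed
    then show "(a,c) \<in> chain_rel d Y g" using a c unfolding chain_rel_def by blast
  qed
qed


lemma chain_transfer:
  assumes P_Y: "\<And>a u. P a u \<Longrightarrow> u \<in> YB"
    and P_ex: "\<And>a. a \<in> YA \<Longrightarrow> \<exists>u. P a u"
    and step: "\<And>a b u v. a \<in> YA \<Longrightarrow> b \<in> YA \<Longrightarrow> dA (gA a) b \<le> eA \<Longrightarrow> P a u \<Longrightarrow> P b v
                 \<Longrightarrow> dB (gB u) v \<le> eB"
    and ch: "is_chain dA YA gA eA k a b" and Pa: "P a u" and Pb: "P b v"
  shows "is_chain dB YB gB eB k u v"
proof -
  obtain c where c: "c 0 = a" "c k = b" "\<forall>i\<le>k. c i \<in> YA" "\<forall>i<k. dA (gA (c i)) (c (Suc i)) \<le> eA" and k: "0<k"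
    using ch unfolding is_chain_def by blast
  define w where "w i = (if i = 0 then u else if i = k then v else (SOME u. P (c i) u))" for i
  have Pw: "P (c i) (w i)" if "i \<le> k" for i
  proof -
    consider "i = 0" | "i = k" | "i \<noteq> 0" "i \<noteq> k" by blast
    then show ?thesis
    proof cases
      case 1 then show ?thesis using c Pa by (simp add: w_def)
    next
      case 2 then show ?thesis using c Pb k by (simp add: w_def)
    next
      case 3
      have "\<exists>u. P (c i) u" using P_ex c(3) that by blast
      then show ?thesis using 3 unfolding w_def by (simp add: someI_ex)
    qed
  qed
  have "w 0 = u" by (simp add: w_def)
  moreover have "w k = v" using k by (simp add: w_def)
  moreover have "\<forall>i\<le>k. w i \<in> YB" using Pw P_Y by blast
  moreover have "\<forall>i<k. dB (gB (w i)) (w (Suc i)) \<le> eB"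
  proof (intro allI impI)
    fix i assume i: "i < k"
    show "dB (gB (w i)) (w (Suc i)) \<le> eB"
      by (rule step[of "c i" "c (Suc i)"]) (use i c(3,4) Pw in auto)
  qed
  ultimately show ?thesis unfolding is_chain_def using k by (intro conjI exI[of _ w]) auto
qed


lemma gcd_transfer:
  assumes P_Y: "\<And>a u. P a u \<Longrightarrow> u \<in> YB"
    and P_ex: "\<And>a. a \<in> YA \<Longrightarrow> \<exists>u. P a u"
    and step: "\<And>a b u v. a \<in> YA \<Longrightarrow> b \<in> YA \<Longrightarrow> dA (gA a) b \<le> eA \<Longrightarrow> P a u \<Longrightarrow> P b v
                 \<Longrightarrow> dB (gB u) v \<le> eB"
  shows "cycle_gcd dB YB gB eB dvd cycle_gcd dA YA gA eA"
  unfolding cycle_gcd_def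
proof (rule Gcd_greatest)
  fix k assume "k \<in> {k. \<exists>y\<in>YA. is_chain dA YA gA eA k y y}"
  then obtain y where y: "y \<in> YA" "is_chain dA YA gA eA k y y" by blast
  obtain u where u: "P y u" using P_ex y by blast
  have "is_chain dB YB gB eB k u u" by (rule chain_transfer[where P=P and YA=YA and YB=YB and dA=dA and gA=gA and eA=eA and dB=dB and gB=gB and eB=eB, OF P_Y P_ex step y(2) u u]) auto
  then have "k \<in> {k. \<exists>y\<in>YB. is_chain dB YB gB eB k y y}" using P_Y u by blast
  then show "Gcd {k. \<exists>y\<in>YB. is_chain dB YB gB eB k y y} dvd k" by (rule Gcd_dvd)
qed


lemma rel_transfer:
  assumes P_Y: "\<And>a u. P a u \<Longrightarrow> u \<in> YB"
    and P_ex: "\<And>a. a \<in> YA \<Longrightarrow> \<exists>u. P a u"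
    and step: "\<And>a b u v. a \<in> YA \<Longrightarrow> b \<in> YA \<Longrightarrow> dA (gA a) b \<le> eA \<Longrightarrow> P a u \<Longrightarrow> P b v
                 \<Longrightarrow> dB (gB u) v \<le> eB"
    and r: "rel_delta dA YA gA eA a b" and Pa: "P a u" and Pb: "P b v"
  shows "rel_delta dB YB gB eB u v"
proof -
  obtain k where k: "cycle_gcd dA YA gA eA dvd k" "is_chain dA YA gA eA k a b"
    using r unfolding rel_delta_def by blast
  have "is_chain dB YB gB eB k u v" by (rule chain_transfer[where P=P and YA=YA and YB=YB and dA=dA and gA=gA and eA=eA and dB=dB and gB=gB and eB=eB, OF P_Y P_ex step k(2) Pa Pb]) auto
  moreover have "cycle_gcd dB YB gB eB dvd k"
    using dvd_trans[OF gcd_transfer[where P=P and YA=YA and YB=YB and dA=dA and gA=gA and eA=eA and dB=dB and gB=gB and eB=eB, OF P_Y P_ex step] k(1)] by auto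
  ultimately show ?thesis unfolding rel_delta_def by blast
qed


lemma rel_project:
  assumes hY: "\<And>a. a \<in> YA \<Longrightarrow> h a \<in> YB"
    and gY: "\<And>a. a \<in> YA \<Longrightarrow> gA a \<in> YA"
    and eqv: "\<And>a. a \<in> YA \<Longrightarrow> h (gA a) = gB (h a)"
    and uc: "\<And>\<epsilon>. \<epsilon> > 0 \<Longrightarrow> \<exists>\<delta>>0. \<forall>a\<in>YA. \<forall>b\<in>YA. dA a b \<le> \<delta> \<longrightarrow> dB (h a) (h b) \<le> \<epsilon>"
    and ab: "(a,b) \<in> chain_rel dA YA gA"
  shows "(h a, h b) \<in> chain_rel dB YB gB"
proof -
  have a: "a \<in> YA" and b: "b \<in> YA" using ab by (auto simp: chain_rel_def)
  have "rel_delta dB YB gB \<epsilon> (h a) (h b)" if e: "\<epsilon> > 0" for \<epsilon>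
  proof -
    obtain \<delta> where d: "\<delta> > 0" "\<forall>a\<in>YA. \<forall>b\<in>YA. dA a b \<le> \<delta> \<longrightarrow> dB (h a) (h b) \<le> \<epsilon>"
      using uc[OF e] by blast
    have r: "rel_delta dA YA gA \<delta> a b" using ab d(1) by (auto simp: chain_rel_def)
    show ?thesis
    proof (rule rel_transfer[where P="\<lambda>a u. a \<in> YA \<and> u = h a", OF _ _ _ r])
      fix a b u v assume a: "a \<in> YA" and b: "b \<in> YA" and dd: "dA (gA a) b \<le> \<delta>"
        and u: "a \<in> YA \<and> u = h a" and v: "b \<in> YA \<and> v = h b"
      have "dB (h (gA a)) (h b) \<le> \<epsilon>" using d(2) gY[OF a] b dd by blast
      then show "dB (gB u) v \<le> \<epsilon>" using eqv[OF a] u v by simp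
    qed (use a b hY in auto)
  qed
  then show ?thesis using a b hY by (auto simp: chain_rel_def)
qed




lemma invd_term_bound: "\<bar>(1/2::real)^n * min 1 (dist (x n) (y n))\<bar> \<le> (1/2)^n"
proof -
  have "0 \<le> min 1 (dist (x n) (y n))" "min 1 (dist (x n) (y n)) \<le> 1" by auto
  then show ?thesis by (simp add: mult_left_le)
qed

lemma invd_summable: "summable (\<lambda>n. (1/2::real)^n * min 1 (dist (x n) (y n)))"
  by (rule summable_comparison_test'[where g="\<lambda>n. (1/2)^n" and N=0])
     (use invd_term_bound in auto)

lemma invd_term_le: "(1/2::real)^n * min 1 (dist (x n) (y n)) \<le> invlim_dist x y"
proof -
  have "sum (\<lambda>n. (1/2::real)^n * min 1 (dist (x n) (y n))) {n} \<le> invlim_dist x y"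
    unfolding invlim_dist_def by (rule sum_le_suminf[OF invd_summable]) auto
  then show ?thesis by simp
qed

lemma geom_half_sum_le: "(\<Sum>i<m. (1/2::real)^i) \<le> 2"
proof -
  have "(\<Sum>i<m. (1/2::real)^i) \<le> (\<Sum>i. (1/2::real)^i)"
    by (rule sum_le_suminf) auto
  also have "\<dots> = 2" by (simp add: suminf_geometric)
  finally show ?thesis .
qed

lemma invd_bound:
  assumes e: "0 \<le> e" and close: "\<forall>n\<le>N. dist (u n) (v n) \<le> e"
  shows "invlim_dist u v \<le> 2*e + (1/2)^N"
proof -
  define t where "t n = (1/2::real)^n * min 1 (dist (u n) (v n))" for n
  have st: "summable t" unfolding t_def by (rule invd_summable)
  have split: "invlim_dist u v = (\<Sum>n. t (n + Suc N)) + (\<Sum>i<Suc N. t i)"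
    unfolding invlim_dist_def t_def[symmetric] by (rule suminf_split_initial_segment[OF st])
  have G: "(\<Sum>n. (1/2::real)^n) = 2"
    by (simp add: suminf_geometric)
  have sg: "summable (\<lambda>n. (1/2::real)^Suc N * (1/2)^n)"
    by (rule summable_mult) simp
  have "(\<Sum>n. t (n + Suc N)) \<le> (\<Sum>n. (1/2::real)^Suc N * (1/2)^n)"
  proof (rule suminf_le)
    fix n
    have "t (n + Suc N) \<le> (1/2)^(n + Suc N)" unfolding t_def using invd_term_bound[of "n + Suc N" u v] by simp
    then show "t (n + Suc N) \<le> (1/2::real)^Suc N * (1/2)^n" by (simp add: power_add mult.commute)
  qed (use summable_ignore_initial_segment[OF st, of "Suc N"] sg in simp_all)
  also have "\<dots> = (1/2::real)^Suc N * (\<Sum>n. (1/2::real)^n)"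
    by (rule suminf_mult) simp
  also have "\<dots> = (1/2)^N" using G by simp
  finally have A: "(\<Sum>n. t (n + Suc N)) \<le> (1/2)^N" .
  have "(\<Sum>i<Suc N. t i) \<le> (\<Sum>i<Suc N. (1/2::real)^i * e)"
  proof (rule sum_mono)
    fix i assume "i \<in> {..<Suc N}"
    then have "dist (u i) (v i) \<le> e" using close by auto
    then have "min 1 (dist (u i) (v i)) \<le> e" by linarith
    then show "t i \<le> (1/2::real)^i * e" unfolding t_def by (simp add: mult_left_mono)
  qed
  also have "\<dots> = (\<Sum>i<Suc N. (1/2::real)^i) * e" by (rule sum_distrib_right[symmetric])
  also have "\<dots> \<le> 2 * e" by (rule mult_right_mono[OF geom_half_sum_le e])
  finally have B: "(\<Sum>i<Suc N. t i) \<le> 2 * e" .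
  show ?thesis using split A B by linarith
qed



lemma is_chain_mono:
  assumes "is_chain d Y g \<delta> k a b" "\<delta> \<le> \<delta>'"
  shows "is_chain d Y g \<delta>' k a b"
proof -
  obtain c where c: "c 0 = a" "c k = b" "\<forall>i\<le>k. c i \<in> Y" "\<forall>i<k. d (g (c i)) (c (Suc i)) \<le> \<delta>" and k: "0<k"
    using assms(1) unfolding is_chain_def by blast
  have "\<forall>i<k. d (g (c i)) (c (Suc i)) \<le> \<delta>'" using c(4) assms(2) by force
  then show ?thesis unfolding is_chain_def using c k by blast
qed

lemma cycle_gcd_mono:
  assumes "\<delta> \<le> \<delta>'"
  shows "cycle_gcd d Y g \<delta>' dvd cycle_gcd d Y g \<delta>"
  unfolding cycle_gcd_def
proof (rule Gcd_greatest)
  fix k assume "k \<in> {k. \<exists>y\<in>Y. is_chain d Y g \<delta> k y y}"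
  then obtain y where y: "y \<in> Y" "is_chain d Y g \<delta> k y y" by blast
  have "is_chain d Y g \<delta>' k y y" by (rule is_chain_mono[OF y(2) assms])
  then have "k \<in> {k. \<exists>y\<in>Y. is_chain d Y g \<delta>' k y y}" using y(1) by blast
  then show "Gcd {k. \<exists>y\<in>Y. is_chain d Y g \<delta>' k y y} dvd k" by (rule Gcd_dvd)
qed

lemma class_closed:
  fixes g :: "'a::metric_space \<Rightarrow> 'a"
  assumes Yc: "closed Y"
  shows "closed (chain_rel dist Y g `` {a})"
proof (subst closed_sequential_limits, intro allI impI, elim conjE)
  fix s l assume s: "\<forall>n. s n \<in> chain_rel dist Y g `` {a}" and lim: "s \<longlonglongrightarrow> l"
  have sr: "(a, s n) \<in> chain_rel dist Y g" for n using s by blast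
  have a: "a \<in> Y" using sr[of 0] unfolding chain_rel_def by blast
  have sY: "\<And>n. s n \<in> Y" using sr unfolding chain_rel_def by blast
  have l: "l \<in> Y" using closed_sequentially[OF Yc sY lim] .
  have "rel_delta dist Y g \<delta> a l" if dpos: "\<delta> > 0" for \<delta>
  proof -
    have "\<delta>/2 > 0" using dpos by simp
    then obtain n0 where n0: "\<forall>n\<ge>n0. dist (s n) l < \<delta>/2" using lim unfolding lim_sequentially by blast
    define y where "y = s n0"
    have yl: "dist y l < \<delta>/2" using n0 unfolding y_def by blast
    have "rel_delta dist Y g (\<delta>/2) a y" using sr[of n0] \<open>\<delta>/2 > 0\<close> unfolding chain_rel_def y_def by blast
    then obtain k where k: "cycle_gcd dist Y g (\<delta>/2) dvd k" "is_chain dist Y g (\<delta>/2) k a y"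
      unfolding rel_delta_def by blast
    obtain c where c: "c 0 = a" "c k = y" "\<forall>i\<le>k. c i \<in> Y" "\<forall>i<k. dist (g (c i)) (c (Suc i)) \<le> \<delta>/2" and kpos: "0<k"
      using k(2) unfolding is_chain_def by blast
    define c' where "c' = c(k := l)"
    have "c' 0 = a" using c(1) kpos unfolding c'_def by simp
    moreover have "c' k = l" unfolding c'_def by simp
    moreover have "\<forall>i\<le>k. c' i \<in> Y" using c(3) l unfolding c'_def by simp
    moreover have "\<forall>i<k. dist (g (c' i)) (c' (Suc i)) \<le> \<delta>"
    proof (intro allI impI)
      fix i assume i: "i < k"
      have ci: "c' i = c i" using i unfolding c'_def by simp
      show "dist (g (c' i)) (c' (Suc i)) \<le> \<delta>"
      proof (cases "Suc i = k")
        case True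
        have "dist (g (c i)) l \<le> dist (g (c i)) y + dist y l" by (rule dist_triangle)
        moreover have "dist (g (c i)) y \<le> \<delta>/2" using c(4) i True c(2) by metis
        ultimately have "dist (g (c i)) l \<le> \<delta>" using yl by linarith
        then show ?thesis using ci True unfolding c'_def by simp
      next
        case False
        then have "c' (Suc i) = c (Suc i)" unfolding c'_def by simp
        moreover have "dist (g (c i)) (c (Suc i)) \<le> \<delta>/2" using c(4) i by blast
        ultimately show ?thesis using ci dpos by simp
      qed
    qed
    ultimately have "is_chain dist Y g \<delta> k a l" unfolding is_chain_def using kpos by blast
    moreover have "cycle_gcd dist Y g \<delta> dvd k"
      using dvd_trans[OF cycle_gcd_mono[of "\<delta>/2" \<delta>] k(1)] dpos by simp
    ultimately show ?thesis unfolding rel_delta_def by blast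
  qed
  then have "(a, l) \<in> chain_rel dist Y g" using a l unfolding chain_rel_def by blast
  then show "l \<in> chain_rel dist Y g `` {a}" by blast
qed



primrec pdown :: "(nat \<Rightarrow> 'a \<Rightarrow> 'a) \<Rightarrow> nat \<Rightarrow> nat \<Rightarrow> 'a \<Rightarrow> 'a" where
  "pdown p n 0 x = x"
| "pdown p n (Suc N) x = (if n \<le> N then pdown p n N (p N x) else x)"

lemma pdown_self: "pdown p n n x = x"
  by (cases n) auto

lemma pdown_step: "n < N \<Longrightarrow> pdown p n N w = p n (pdown p (Suc n) N w)"
proof (induction N arbitrary: w)
  case 0 then show ?case by simp
next
  case (Suc M)
  show ?case
  proof (cases "n = M")
    case True then show ?thesis by (simp add: pdown_self)
  next
    case False
    then have "n < M" using Suc.prems by simp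
    then show ?thesis using Suc.IH[of "p M w"] by simp
  qed
qed

lemma pdown_inv: "x \<in> invlim X p \<Longrightarrow> n \<le> N \<Longrightarrow> pdown p n N (x N) = x n"
proof (induction N)
  case 0 then show ?case by simp
next
  case (Suc M)
  show ?case
  proof (cases "n \<le> M")
    case True
    have "p M (x (Suc M)) = x M" using Suc.prems(1) unfolding invlim_def by blast
    then show ?thesis using True Suc.IH Suc.prems(1) by simp
  next
    case False then have "n = Suc M" using Suc.prems by simp
    then show ?thesis by (simp add: pdown_self)
  qed
qed

lemma pdown_D: "(\<And>m. p m ` D (Suc m) \<subseteq> D m) \<Longrightarrow> x \<in> D N \<Longrightarrow> n \<le> N \<Longrightarrow> pdown p n N x \<in> D n"
proof (induction N arbitrary: x)
  case 0 then show ?case by simp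
next
  case (Suc M)
  show ?case
  proof (cases "n \<le> M")
    case True
    have "p M x \<in> D M" using Suc.prems(1,2) by blast
    then show ?thesis using True Suc.IH[OF Suc.prems(1)] by simp
  next
    case False then have "n = Suc M" using Suc.prems by simp
    then show ?thesis using Suc.prems(2) by (simp add: pdown_self)
  qed
qed

locale invsys =
  fixes X :: "nat \<Rightarrow> 'a::metric_space set"
    and f :: "nat \<Rightarrow> 'a \<Rightarrow> 'a"
    and \<pi> :: "nat \<Rightarrow> 'a \<Rightarrow> 'a"
  assumes compact: "\<And>n. compact (X n)"
    and f_cont: "\<And>n. continuous_on (X n) (f n)"
    and f_maps: "\<And>n. f n ` X n \<subseteq> X n"
    and pi_cont: "\<And>n. continuous_on (X (Suc n)) (\<pi> n)"
    and pi_maps: "\<And>n. \<pi> n ` X (Suc n) \<subseteq> X n"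
    and equivariant: "\<And>n x. x \<in> X (Suc n) \<Longrightarrow> f n (\<pi> n x) = \<pi> n (f (Suc n) x)"
    and ct: "\<And>n. chain_transitive dist (X n) (f n)"
    and mlc: "MLC1 X \<pi>"
begin

lemma fX: "x \<in> X n \<Longrightarrow> f n x \<in> X n" using f_maps by blast
lemma piX: "x \<in> X (Suc n) \<Longrightarrow> \<pi> n x \<in> X n" using pi_maps by blast

lemma L_X: "x \<in> invlim X \<pi> \<Longrightarrow> x n \<in> X n" unfolding invlim_def by blast
lemma L_pi: "x \<in> invlim X \<pi> \<Longrightarrow> \<pi> n (x (Suc n)) = x n" unfolding invlim_def by blast

lemma F_L: assumes x: "x \<in> invlim X \<pi>" shows "limmap f x \<in> invlim X \<pi>"
proof -
  have "limmap f x n \<in> X n" for n using fX[OF L_X[OF x]] unfolding limmap_def .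
  moreover have "\<pi> n (limmap f x (Suc n)) = limmap f x n" for n
    unfolding limmap_def using equivariant[OF L_X[OF x, of "Suc n"]] L_pi[OF x, of n] by simp
  ultimately show ?thesis unfolding invlim_def by blast
qed

lemma pdown_in: "x \<in> X N \<Longrightarrow> n \<le> N \<Longrightarrow> pdown \<pi> n N x \<in> X n"
  using pdown_D[of \<pi> X x N n] pi_maps by blast

lemma pdown_eqv: "x \<in> X N \<Longrightarrow> n \<le> N \<Longrightarrow> f n (pdown \<pi> n N x) = pdown \<pi> n N (f N x)"
proof (induction N arbitrary: x)
  case 0 then show ?case by simp
next
  case (Suc M)
  show ?case
  proof (cases "n \<le> M")
    case True
    have "\<pi> M x \<in> X M" using piX Suc.prems(1) by blast
    then have "f n (pdown \<pi> n M (\<pi> M x)) = pdown \<pi> n M (f M (\<pi> M x))" using Suc.IH True by blast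
    also have "f M (\<pi> M x) = \<pi> M (f (Suc M) x)" using equivariant Suc.prems(1) by blast
    finally show ?thesis using True by simp
  next
    case False then have "n = Suc M" using Suc.prems by simp
    then show ?thesis by (simp add: pdown_self)
  qed
qed

lemma uc_pi: "\<epsilon> > 0 \<Longrightarrow> \<exists>\<delta>>0. \<forall>a\<in>X (Suc n). \<forall>b\<in>X (Suc n). dist a b < \<delta> \<longrightarrow> dist (\<pi> n a) (\<pi> n b) < \<epsilon>"
  using compact_uniformly_continuous[OF pi_cont compact] unfolding uniformly_continuous_on_def
  by (metis dist_commute)

lemma pdown_uc: "\<epsilon> > 0 \<Longrightarrow> \<exists>\<eta>>0. \<forall>a\<in>X N. \<forall>b\<in>X N. dist a b < \<eta> \<longrightarrow>
      (\<forall>n\<le>N. dist (pdown \<pi> n N a) (pdown \<pi> n N b) < \<epsilon>)"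
proof (induction N)
  case 0 then show ?case by auto
next
  case (Suc M)
  obtain \<eta>1 where e1: "\<eta>1 > 0" "\<forall>a\<in>X M. \<forall>b\<in>X M. dist a b < \<eta>1 \<longrightarrow>
      (\<forall>n\<le>M. dist (pdown \<pi> n M a) (pdown \<pi> n M b) < \<epsilon>)" using Suc by blast
  obtain \<eta>2 where e2: "\<eta>2 > 0" "\<forall>a\<in>X (Suc M). \<forall>b\<in>X (Suc M). dist a b < \<eta>2 \<longrightarrow> dist (\<pi> M a) (\<pi> M b) < \<eta>1"
    using uc_pi[OF e1(1)] by blast
  have "\<forall>a\<in>X (Suc M). \<forall>b\<in>X (Suc M). dist a b < min \<epsilon> \<eta>2 \<longrightarrow>
      (\<forall>n\<le>Suc M. dist (pdown \<pi> n (Suc M) a) (pdown \<pi> n (Suc M) b) < \<epsilon>)"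
  proof (intro ballI impI allI)
    fix a b n assume a: "a \<in> X (Suc M)" and b: "b \<in> X (Suc M)" and ab: "dist a b < min \<epsilon> \<eta>2" and n: "n \<le> Suc M"
    show "dist (pdown \<pi> n (Suc M) a) (pdown \<pi> n (Suc M) b) < \<epsilon>"
    proof (cases "n \<le> M")
      case True
      have "dist (\<pi> M a) (\<pi> M b) < \<eta>1" using e2(2) a b ab by simp
      moreover have "\<pi> M a \<in> X M" "\<pi> M b \<in> X M" using piX a b by auto
      ultimately have "dist (pdown \<pi> n M (\<pi> M a)) (pdown \<pi> n M (\<pi> M b)) < \<epsilon>" using e1(2) True by blast
      then show ?thesis using True by simp
    next
      case False then have "n = Suc M" using n by simp
      then show ?thesis using ab by (simp add: pdown_self)
    qed
  qed
  moreover have "min \<epsilon> \<eta>2 > 0" using Suc.prems e2(1) by simp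
  ultimately show ?case by blast
qed

end


context invsys
begin

lemma mlc_ext: assumes "y \<in> \<pi> k ` X (Suc k)" shows "\<exists>y'\<in>\<pi> (Suc k) ` X (Suc (Suc k)). \<pi> k y' = y"
proof -
  have "\<pi> k ` X (Suc k) = \<pi> k ` (\<pi> (Suc k) ` X (Suc (Suc k)))" using mlc unfolding MLC1_def by blast
  then have "y \<in> \<pi> k ` (\<pi> (Suc k) ` X (Suc (Suc k)))" using assms by simp
  then obtain y' where "y' \<in> \<pi> (Suc k) ` X (Suc (Suc k))" "y = \<pi> k y'" by (rule imageE)
  then show ?thesis by blast
qed

lemma lift: assumes c: "c \<in> X (Suc N)" shows "\<exists>z\<in>invlim X \<pi>. z N = \<pi> N c"
proof -
  define Y where "Y k = \<pi> k ` X (Suc k)" for k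
  define u where "u = rec_nat (\<pi> N c) (\<lambda>j y. SOME y'. y' \<in> Y (Suc (N+j)) \<and> \<pi> (N+j) y' = y)"
  have u0: "u 0 = \<pi> N c" unfolding u_def by simp
  have uS: "u (Suc j) = (SOME y'. y' \<in> Y (Suc (N+j)) \<and> \<pi> (N+j) y' = u j)" for j unfolding u_def by simp
  have stp: "u (Suc j) \<in> Y (Suc (N+j)) \<and> \<pi> (N+j) (u (Suc j)) = u j" if uj: "u j \<in> Y (N+j)" for j
  proof -
    have "\<exists>y'\<in>\<pi> (Suc (N+j)) ` X (Suc (Suc (N+j))). \<pi> (N+j) y' = u j"
      using mlc_ext[of "u j" "N+j"] uj unfolding Y_def by blast
    then have "\<exists>y'. y' \<in> Y (Suc (N+j)) \<and> \<pi> (N+j) y' = u j" unfolding Y_def by blast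
    then show ?thesis unfolding uS by (rule someI_ex)
  qed
  have uY1: "u j \<in> Y (N+j)" for j
  proof (induction j)
    case 0 then show ?case using u0 c unfolding Y_def by simp
  next
    case (Suc j) then show ?case using stp[of j] by simp
  qed
  have uY: "u j \<in> Y (N+j) \<and> \<pi> (N+j) (u (Suc j)) = u j" for j
    using uY1[of j] stp[of j] by blast
  define z where "z n = (if N \<le> n then u (n - N) else pdown \<pi> n N (\<pi> N c))" for n
  have pc: "\<pi> N c \<in> X N" using piX c by blast
  have zX: "z n \<in> X n" for n
  proof (cases "N \<le> n")
    case True
    then have "u (n - N) \<in> Y n" using uY[of "n - N"] by simp
    then show ?thesis using True piX unfolding z_def Y_def by auto
  next
    case False then show ?thesis using pdown_in[OF pc] unfolding z_def by simp
  qed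
  have zpi: "\<pi> n (z (Suc n)) = z n" for n
  proof -
    consider "N \<le> n" | "Suc n = N" | "Suc n < N" by linarith
    then show ?thesis
    proof cases
      case 1
      then have "Suc n - N = Suc (n - N)" by simp
      then show ?thesis using 1 uY[of "n - N"] unfolding z_def by simp
    next
      case 2
      then have "z (Suc n) = \<pi> N c" using u0 unfolding z_def by simp
      moreover have "z n = pdown \<pi> n (Suc n) (\<pi> N c)" using 2 unfolding z_def by simp
      ultimately show ?thesis by (simp add: pdown_self)
    next
      case 3
      then show ?thesis unfolding z_def using pdown_step[of n N \<pi> "\<pi> N c"] by simp
    qed
  qed
  have "z \<in> invlim X \<pi>" unfolding invlim_def using zX zpi by blast
  moreover have "z N = \<pi> N c" using u0 unfolding z_def by simp
  ultimately show ?thesis by blast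
qed

end


context invsys
begin

lemma r_pi:
  assumes ab: "(a,b) \<in> chain_rel dist (X (Suc n)) (f (Suc n))"
  shows "(\<pi> n a, \<pi> n b) \<in> chain_rel dist (X n) (f n)"
proof (rule rel_project[OF _ _ _ _ ab])
  show "\<And>a. a \<in> X (Suc n) \<Longrightarrow> \<pi> n a \<in> X n" by (rule piX)
  show "\<And>a. a \<in> X (Suc n) \<Longrightarrow> f (Suc n) a \<in> X (Suc n)" by (rule fX)
  show "\<And>a. a \<in> X (Suc n) \<Longrightarrow> \<pi> n (f (Suc n) a) = f n (\<pi> n a)" using equivariant by simp
  fix \<epsilon> :: real assume e: "\<epsilon> > 0"
  obtain \<delta> where d: "\<delta> > 0" "\<forall>a\<in>X (Suc n). \<forall>b\<in>X (Suc n). dist a b < \<delta> \<longrightarrow> dist (\<pi> n a) (\<pi> n b) < \<epsilon>"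
    using uc_pi[OF e] by blast
  have "\<forall>a\<in>X (Suc n). \<forall>b\<in>X (Suc n). dist a b \<le> \<delta>/2 \<longrightarrow> dist (\<pi> n a) (\<pi> n b) \<le> \<epsilon>"
  proof (intro ballI impI)
    fix a b assume "a \<in> X (Suc n)" "b \<in> X (Suc n)" "dist a b \<le> \<delta>/2"
    moreover have "\<delta>/2 < \<delta>" using d(1) by simp
    ultimately show "dist (\<pi> n a) (\<pi> n b) \<le> \<epsilon>" using d(2) by fastforce
  qed
  moreover have "\<delta>/2 > 0" using d(1) by simp
  ultimately show "\<exists>\<delta>>0. \<forall>a\<in>X (Suc n). \<forall>b\<in>X (Suc n). dist a b \<le> \<delta> \<longrightarrow> dist (\<pi> n a) (\<pi> n b) \<le> \<epsilon>"
    by blast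
qed

lemma K1:
  assumes xy: "(x,y) \<in> chain_rel invlim_dist (invlim X \<pi>) (limmap f)"
  shows "(x n, y n) \<in> chain_rel dist (X n) (f n)"
proof (rule rel_project[where h="\<lambda>x. x n", OF _ _ _ _ xy])
  show "\<And>a. a \<in> invlim X \<pi> \<Longrightarrow> a n \<in> X n" by (rule L_X)
  show "\<And>a. a \<in> invlim X \<pi> \<Longrightarrow> limmap f a \<in> invlim X \<pi>" by (rule F_L)
  show "\<And>a. a \<in> invlim X \<pi> \<Longrightarrow> limmap f a n = f n (a n)" unfolding limmap_def by simp
  fix \<epsilon> :: real assume e: "\<epsilon> > 0"
  define \<delta> where "\<delta> = (1/2::real)^n * min \<epsilon> (1/2)"
  have dpos: "\<delta> > 0" unfolding \<delta>_def using e by simp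
  have "\<forall>a\<in>invlim X \<pi>. \<forall>b\<in>invlim X \<pi>. invlim_dist a b \<le> \<delta> \<longrightarrow> dist (a n) (b n) \<le> \<epsilon>"
  proof (intro ballI impI)
    fix a b :: "nat \<Rightarrow> 'a" assume "invlim_dist a b \<le> \<delta>"
    then have "(1/2::real)^n * min 1 (dist (a n) (b n)) \<le> (1/2::real)^n * min \<epsilon> (1/2)"
      using invd_term_le[of n a b] unfolding \<delta>_def by linarith
    then have "min 1 (dist (a n) (b n)) \<le> min \<epsilon> (1/2)"
      by (simp add: mult_le_cancel_left_pos)
    then show "dist (a n) (b n) \<le> \<epsilon>" by linarith
  qed
  then show "\<exists>\<delta>>0. \<forall>a\<in>invlim X \<pi>. \<forall>b\<in>invlim X \<pi>. invlim_dist a b \<le> \<delta> \<longrightarrow> dist (a n) (b n) \<le> \<epsilon>"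
    using dpos by blast
qed

lemma K2:
  assumes x: "x \<in> invlim X \<pi>" and y: "y \<in> invlim X \<pi>"
    and r: "\<And>n. (x n, y n) \<in> chain_rel dist (X n) (f n)"
  shows "(x,y) \<in> chain_rel invlim_dist (invlim X \<pi>) (limmap f)"
proof -
  have "rel_delta invlim_dist (invlim X \<pi>) (limmap f) \<delta> x y" if dpos: "\<delta> > 0" for \<delta>
  proof -
    obtain N where N: "(1/2::real)^N < \<delta>/2" using real_arch_pow_inv[of "\<delta>/2" "1/2::real"] dpos by auto
    define e where "e = \<delta>/4"
    have epos: "e > 0" unfolding e_def using dpos by simp
    obtain \<eta> where eta: "\<eta> > 0" "\<forall>a\<in>X N. \<forall>b\<in>X N. dist a b < \<eta> \<longrightarrow>
        (\<forall>n\<le>N. dist (pdown \<pi> n N a) (pdown \<pi> n N b) < e)" using pdown_uc[OF epos] by blast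
    obtain \<eta>2 where eta2: "\<eta>2 > 0" "\<forall>a\<in>X (Suc N). \<forall>b\<in>X (Suc N). dist a b < \<eta>2 \<longrightarrow> dist (\<pi> N a) (\<pi> N b) < \<eta>"
      using uc_pi[OF eta(1)] by blast
    have rd: "rel_delta dist (X (Suc N)) (f (Suc N)) (\<eta>2/2) (x (Suc N)) (y (Suc N))"
      using r[of "Suc N"] eta2(1) unfolding chain_rel_def by simp
    show ?thesis
    proof (rule rel_transfer[where P="\<lambda>c z. z \<in> invlim X \<pi> \<and> z N = \<pi> N c", OF _ _ _ rd])
      show "\<And>a u. u \<in> invlim X \<pi> \<and> u N = \<pi> N a \<Longrightarrow> u \<in> invlim X \<pi>" by blast
      show "\<And>a. a \<in> X (Suc N) \<Longrightarrow> \<exists>u. u \<in> invlim X \<pi> \<and> u N = \<pi> N a" using lift by blast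
      show "x \<in> invlim X \<pi> \<and> x N = \<pi> N (x (Suc N))" using x L_pi[OF x] by simp
      show "y \<in> invlim X \<pi> \<and> y N = \<pi> N (y (Suc N))" using y L_pi[OF y] by simp
      fix a b z z' assume a: "a \<in> X (Suc N)" and b: "b \<in> X (Suc N)" and ab: "dist (f (Suc N) a) b \<le> \<eta>2/2"
        and z: "z \<in> invlim X \<pi> \<and> z N = \<pi> N a" and z': "z' \<in> invlim X \<pi> \<and> z' N = \<pi> N b"
      have fa: "f (Suc N) a \<in> X (Suc N)" using fX a by blast
      have "dist (f (Suc N) a) b < \<eta>2" using ab eta2(1) by linarith
      then have d1: "dist (\<pi> N (f (Suc N) a)) (\<pi> N b) < \<eta>" using eta2(2) fa b by blast
      have e1: "\<pi> N (f (Suc N) a) = f N (z N)" using z equivariant[OF a] by simp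
      have zN: "z N \<in> X N" using L_X z by blast
      have fzN: "f N (z N) \<in> X N" using fX zN by blast
      have z'N: "z' N \<in> X N" using L_X z' by blast
      have "\<forall>n\<le>N. dist (limmap f z n) (z' n) \<le> e"
      proof (intro allI impI)
        fix n assume n: "n \<le> N"
        have pz: "pdown \<pi> n N (z N) = z n" using pdown_inv[OF _ n] z by blast
        have "limmap f z n = f n (pdown \<pi> n N (z N))" unfolding limmap_def using pz by simp
        also have "\<dots> = pdown \<pi> n N (f N (z N))" by (rule pdown_eqv[OF zN n])
        finally have l1: "limmap f z n = pdown \<pi> n N (f N (z N))" .
        have l2: "z' n = pdown \<pi> n N (z' N)" using pdown_inv[OF _ n] z' by metis
        have "dist (f N (z N)) (z' N) < \<eta>" using d1 e1 z' by simp
        then have "dist (pdown \<pi> n N (f N (z N))) (pdown \<pi> n N (z' N)) < e" using eta(2) fzN z'N n by blast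
        then show "dist (limmap f z n) (z' n) \<le> e" using l1 l2 by simp
      qed
      then have "invlim_dist (limmap f z) z' \<le> 2*e + (1/2)^N" using invd_bound[of e N "limmap f z" z'] epos by simp
      then show "invlim_dist (limmap f z) z' \<le> \<delta>" using N unfolding e_def by linarith
    qed
  qed
  then show ?thesis using x y unfolding chain_rel_def by blast
qed

end


lemma compact_prod_set:
  fixes X :: "nat \<Rightarrow> 'a::metric_space set"
  assumes "\<And>n. compact (X n)"
  shows "compact {x::nat \<Rightarrow> 'a. \<forall>n. x n \<in> X n}"
proof -
  have eq: "{x::nat \<Rightarrow> 'a. \<forall>n. x n \<in> X n} = PiE UNIV X" by (auto simp: PiE_def Pi_def)
  have "compactin (product_topology (\<lambda>i. euclidean) UNIV) (PiE UNIV X)"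
    using assms by (simp add: compactin_PiE)
  then have "compactin euclidean (PiE UNIV X)" by (simp add: euclidean_product_topology)
  then show ?thesis using eq by simp
qed

context invsys
begin

lemma eqv: "equiv (X n) (chain_rel dist (X n) (f n))"
  by (rule chain_rel_equiv[OF ct])

lemma bracket_nonempty:
  assumes D: "D \<in> Dpi X f \<pi>"
  shows "\<exists>x. x \<in> bracket X \<pi> D"
proof -
  have Dq: "D n \<in> X n // chain_rel dist (X n) (f n)" for n using D unfolding Dpi_def Dcl_def by blast
  have Dpi': "\<pi> n ` D (Suc n) \<subseteq> D n" for n using D unfolding Dpi_def by blast
  have Dprops: "D n \<subseteq> X n \<and> D n \<noteq> {} \<and> closed (D n)" for n
  proof -
    obtain a where a: "D n = chain_rel dist (X n) (f n) `` {a}" "a \<in> X n" using Dq[of n] by (rule quotientE)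
    have "a \<in> D n" using a equiv_class_self[OF eqv] by blast
    moreover have "D n \<subseteq> X n" using a unfolding chain_rel_def by blast
    moreover have "closed (D n)" using a class_closed[OF compact_imp_closed[OF compact]] by simp
    ultimately show ?thesis by blast
  qed
  have ex: "\<exists>z. z \<in> invlim X \<pi> \<and> z N \<in> D N" for N
  proof -
    obtain b where b: "b \<in> D (Suc N)" using Dprops[of "Suc N"] by blast
    have bX: "b \<in> X (Suc N)" using b Dprops[of "Suc N"] by blast
    have pb: "\<pi> N b \<in> D N" using b Dpi'[of N] by blast
    obtain z where "z \<in> invlim X \<pi>" "z N = \<pi> N b" using lift[OF bX] by blast
    then show ?thesis using pb by auto
  qed
  then have "\<forall>N. \<exists>z. z \<in> invlim X \<pi> \<and> z N \<in> D N" by blast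
  then obtain zs where zs0: "\<forall>N. zs N \<in> invlim X \<pi> \<and> zs N N \<in> D N" by (rule choice[THEN exE])
  then have zs: "\<And>N. zs N \<in> invlim X \<pi> \<and> zs N N \<in> D N" by blast
  have zsD: "zs N n \<in> D n" if "n \<le> N" for N n
  proof -
    have "pdown \<pi> n N (zs N N) \<in> D n" using pdown_D[of \<pi> D "zs N N" N n] Dpi' zs that by blast
    moreover have "pdown \<pi> n N (zs N N) = zs N n" using pdown_inv[OF _ that] zs by blast
    ultimately show ?thesis by simp
  qed
  define K where "K = {x::nat \<Rightarrow> 'a. \<forall>n. x n \<in> X n}"
  have "compact K" unfolding K_def by (rule compact_prod_set[OF compact])
  then have sc: "seq_compact K" by (rule compact_imp_seq_compact)
  have zsK: "\<forall>N. zs N \<in> K" using zs L_X unfolding K_def by blast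
  obtain l \<sigma> where l: "l \<in> K" and sm: "strict_mono (\<sigma> :: nat \<Rightarrow> nat)" and lim: "(zs \<circ> \<sigma>) \<longlonglongrightarrow> l"
    using seq_compactE[OF sc zsK] by blast
  have limn: "(\<lambda>j. zs (\<sigma> j) n) \<longlonglongrightarrow> l n" for n
    using continuous_on_tendsto_compose[OF continuous_on_product_coordinates[of n] lim] by (simp add: o_def)
  have lX: "l n \<in> X n" for n using l unfolding K_def by blast
  have lpi: "\<pi> n (l (Suc n)) = l n" for n
  proof -
    have "(\<lambda>j. \<pi> n (zs (\<sigma> j) (Suc n))) \<longlonglongrightarrow> \<pi> n (l (Suc n))"
    proof (rule continuous_on_tendsto_compose[OF pi_cont limn lX])
      have "zs (\<sigma> j) (Suc n) \<in> X (Suc n)" for j using zs L_X by blast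
      then show "\<forall>\<^sub>F j in sequentially. zs (\<sigma> j) (Suc n) \<in> X (Suc n)" by (simp add: always_eventually)
    qed
    moreover have "\<pi> n (zs m (Suc n)) = zs m n" for m using L_pi zs by blast
    ultimately have "(\<lambda>j. zs (\<sigma> j) n) \<longlonglongrightarrow> \<pi> n (l (Suc n))" by simp
    from LIMSEQ_unique[OF this limn] show ?thesis .
  qed
  have lD: "l n \<in> D n" for n
  proof (rule Lim_in_closed_set[OF _ _ _ limn])
    show "closed (D n)" using Dprops by blast
    show "sequentially \<noteq> bot" by simp
    have "\<forall>j\<ge>n. zs (\<sigma> j) n \<in> D n"
    proof (intro allI impI)
      fix j assume "n \<le> j"
      then have "n \<le> \<sigma> j" using seq_suble[OF sm, of j] by linarith
      then show "zs (\<sigma> j) n \<in> D n" by (rule zsD)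
    qed
    then show "\<forall>\<^sub>F j in sequentially. zs (\<sigma> j) n \<in> D n" unfolding eventually_sequentially by blast
  qed
  have "l \<in> invlim X \<pi>" unfolding invlim_def using lX lpi by blast
  then show ?thesis unfolding bracket_def using lD by blast
qed

lemma Kx:
  assumes x: "x \<in> invlim X \<pi>"
  shows "chain_rel invlim_dist (invlim X \<pi>) (limmap f) `` {x}
           = bracket X \<pi> (\<lambda>n. chain_rel dist (X n) (f n) `` {x n})"
proof
  show "chain_rel invlim_dist (invlim X \<pi>) (limmap f) `` {x} \<subseteq> bracket X \<pi> (\<lambda>n. chain_rel dist (X n) (f n) `` {x n})"
  proof
    fix y assume "y \<in> chain_rel invlim_dist (invlim X \<pi>) (limmap f) `` {x}"
    then have xy: "(x,y) \<in> chain_rel invlim_dist (invlim X \<pi>) (limmap f)" by blast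
    then have "y \<in> invlim X \<pi>" unfolding chain_rel_def by blast
    moreover have "\<forall>n. y n \<in> chain_rel dist (X n) (f n) `` {x n}" using K1[OF xy] by blast
    ultimately show "y \<in> bracket X \<pi> (\<lambda>n. chain_rel dist (X n) (f n) `` {x n})" unfolding bracket_def by blast
  qed
  show "bracket X \<pi> (\<lambda>n. chain_rel dist (X n) (f n) `` {x n}) \<subseteq> chain_rel invlim_dist (invlim X \<pi>) (limmap f) `` {x}"
  proof
    fix y assume "y \<in> bracket X \<pi> (\<lambda>n. chain_rel dist (X n) (f n) `` {x n})"
    then have y: "y \<in> invlim X \<pi>" and r: "\<And>n. (x n, y n) \<in> chain_rel dist (X n) (f n)"
      unfolding bracket_def by blast+
    show "y \<in> chain_rel invlim_dist (invlim X \<pi>) (limmap f) `` {x}" using K2[OF x y r] by blast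
  qed
qed

lemma main: "Dcl invlim_dist (invlim X \<pi>) (limmap f) = bracket X \<pi> ` Dpi X f \<pi>"
proof
  show "Dcl invlim_dist (invlim X \<pi>) (limmap f) \<subseteq> bracket X \<pi> ` Dpi X f \<pi>"
  proof
    fix A assume "A \<in> Dcl invlim_dist (invlim X \<pi>) (limmap f)"
    then obtain x where A: "A = chain_rel invlim_dist (invlim X \<pi>) (limmap f) `` {x}" and x: "x \<in> invlim X \<pi>"
      unfolding Dcl_def by (rule quotientE)
    define D where "D n = chain_rel dist (X n) (f n) `` {x n}" for n
    have "D n \<in> Dcl dist (X n) (f n)" for n unfolding D_def Dcl_def by (rule quotientI[OF L_X[OF x]])
    moreover have "\<pi> n ` D (Suc n) \<subseteq> D n" for n
    proof
      fix w assume "w \<in> \<pi> n ` D (Suc n)"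
      then obtain b where b: "b \<in> D (Suc n)" "w = \<pi> n b" by blast
      have "(x (Suc n), b) \<in> chain_rel dist (X (Suc n)) (f (Suc n))" using b(1) unfolding D_def by blast
      then have "(\<pi> n (x (Suc n)), \<pi> n b) \<in> chain_rel dist (X n) (f n)" by (rule r_pi)
      then show "w \<in> D n" using b(2) L_pi[OF x] unfolding D_def by simp
    qed
    ultimately have "D \<in> Dpi X f \<pi>" unfolding Dpi_def by blast
    moreover have "A = bracket X \<pi> D" using A Kx[OF x] unfolding D_def by simp
    ultimately show "A \<in> bracket X \<pi> ` Dpi X f \<pi>" by blast
  qed
  show "bracket X \<pi> ` Dpi X f \<pi> \<subseteq> Dcl invlim_dist (invlim X \<pi>) (limmap f)"
  proof
    fix A assume "A \<in> bracket X \<pi> ` Dpi X f \<pi>"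
    then obtain D where D: "D \<in> Dpi X f \<pi>" and A: "A = bracket X \<pi> D" by blast
    obtain x where xb: "x \<in> bracket X \<pi> D" using bracket_nonempty[OF D] by blast
    then have x: "x \<in> invlim X \<pi>" and xD: "\<And>n. x n \<in> D n" unfolding bracket_def by blast+
    have "D n = chain_rel dist (X n) (f n) `` {x n}" for n
    proof -
      have "D n \<in> X n // chain_rel dist (X n) (f n)" using D unfolding Dpi_def Dcl_def by blast
      then obtain a where a: "D n = chain_rel dist (X n) (f n) `` {a}" "a \<in> X n" by (rule quotientE)
      then have "(a, x n) \<in> chain_rel dist (X n) (f n)" using xD[of n] by blast
      from equiv_class_eq[OF eqv this] show ?thesis using a(1) by simp
    qed
    then have "D = (\<lambda>n. chain_rel dist (X n) (f n) `` {x n})" by blast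
    then have "A = chain_rel invlim_dist (invlim X \<pi>) (limmap f) `` {x}" using A Kx[OF x] by simp
    then show "A \<in> Dcl invlim_dist (invlim X \<pi>) (limmap f)" unfolding Dcl_def using quotientI[OF x] by simp
  qed
qed

end


theorem lemma3p3:
  fixes X :: "nat \<Rightarrow> 'a::metric_space set"
    and f :: "nat \<Rightarrow> 'a \<Rightarrow> 'a"
    and \<pi> :: "nat \<Rightarrow> 'a \<Rightarrow> 'a"
  assumes compact: "\<And>n. compact (X n)"
    and f_cont: "\<And>n. continuous_on (X n) (f n)"
    and f_maps: "\<And>n. f n ` X n \<subseteq> X n"
    and pi_cont: "\<And>n. continuous_on (X (Suc n)) (\<pi> n)"
    and pi_maps: "\<And>n. \<pi> n ` X (Suc n) \<subseteq> X n"
    and equivariant: "\<And>n x. x \<in> X (Suc n) \<Longrightarrow> f n (\<pi> n x) = \<pi> n (f (Suc n) x)"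
    and ct: "\<And>n. chain_transitive dist (X n) (f n)"
    and mlc: "MLC1 X \<pi>"
  shows "Dcl invlim_dist (invlim X \<pi>) (limmap f) = bracket X \<pi> ` Dpi X f \<pi>"
proof -
  interpret invsys X f \<pi>
    using assms by (unfold_locales) auto
  show ?thesis by (rule main)
qed

end
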